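(* Fix $\mu\in(-1,1)$ and let $u^\xi\in\mathcal M_\mu$. Then for $j,k\in\{1,\dots,N\}$, $$S_{kj}:=\langle u^\xi_k,u^\xi_j\rangle=\mathcal X\varepsilon^{-1}\big[\delta_{kj}+(-1)^{k+j}\big]+\mathcal O(\exp).$$
   Context: $0<\varepsilon\ll1$; $f(u)=u^3-u$; $\langle\cdot,\cdot\rangle$ inner product of $L^2(0,1)$. $U(x)=\tanh(x/\sqrt2)$; $U(x;\xi,\pm1)=\pm U((x-\xi)/\varepsilon)$; $\mathcal X=\int_{\mathbb R}U'(y)^2dy$. Fix an integer $N\ge1$, small $\kappa_0>0$, $\rho_\varepsilon=\varepsilon^{\kappa_0}$. $\Omega_{\rho_\varepsilon}=\{h\in\mathbb R^{N+1}:0<h_1<\dots<h_{N+1}<1,\ \min_{j=0,\dots,N+1}|h_{j+1}-h_j|>\varepsilon/\rho_\varepsilon\}$ with $h_0=-h_1$, $h_{N+2}=2-h_{N+1}$. For $h\in\Omega_{\rho_\varepsilon}$, $u^h=\sum_{j=1}^{N+1}U(\cdot;h_j,(-1)^{j+1})+\beta_N$, where $\beta_N=\frac{(-1)^N-1}{2}+\mathcal O(\exp)$ (also for derivatives) makes $u^h(0)=-1$ and $u^h$ satisfy Neumann boundary conditions; $\mathcal O(\exp)$ means exponentially small in $\varepsilon$. $\mathcal M=\{u^h:h\in\Omega_{\rho_\varepsilon}\}$, $\mathcal M_\mu=\{u^h\in\mathcal M:\int_0^1u^h=\mu\}$. There is a smooth map $h_{N+1}:[0,1]^N\to\mathbb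 R$ such that $u^h\in\mathcal M_\mu$ iff $h=(\xi,h_{N+1}(\xi))\in\Omega_{\rho_\varepsilon}$, $\xi=(h_1,\dots,h_N)$, and $\partial h_{N+1}/\partial h_i=(-1)^{N-i}+\mathcal O(\exp)$. $u^\xi=u^{(\xi,h_{N+1}(\xi))}$, $u^\xi_k=\partial_{\xi_k}u^\xi$. *)

theory Defs
  imports "HOL-Analysis.Analysis"
begin

definition Uprof :: "real \<Rightarrow> real" where
  "Uprof x = tanh (x / sqrt 2)"

definition Xconst :: real where
  "Xconst = integral UNIV (\<lambda>y. (deriv Uprof y)\<^sup>2)"

definition hext :: "nat \<Rightarrow> (nat \<Rightarrow> real) \<Rightarrow> nat \<Rightarrow> real" where
  "hext N h j = (if j = 0 then - h 1 else if j = N + 2 then 2 - h (N + 1) else h j)"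

text \<open>The set Omega_{rho_eps} with rho_eps = eps^kappa0 (h indexed by 1..N+1).\<close>
definition Omega :: "nat \<Rightarrow> real \<Rightarrow> real \<Rightarrow> (nat \<Rightarrow> real) \<Rightarrow> bool" where
  "Omega N \<kappa>0 \<epsilon> h \<longleftrightarrow>
     0 < h 1 \<and> (\<forall>j\<in>{1..N}. h j < h (j + 1)) \<and> h (N + 1) < 1 \<and>
     (\<forall>j\<in>{0..N+1}. \<bar>hext N h (j + 1) - hext N h j\<bar> > \<epsilon> / (\<epsilon> powr \<kappa>0))"

text \<open>u^h(x) = sum_{j=1}^{N+1} U((x-h_j)/eps; (-1)^(j+1)) + beta_N(h,x); the correction
  beta_N is the parameter b (depending on eps, h, x).\<close>
definition uh :: "nat \<Rightarrow> (real \<Rightarrow> (nat \<Rightarrow> real) \<Rightarrow> real \<Rightarrow> real) \<Rightarrow> real \<Rightarrow> (nat \<Rightarrow> real) \<Rightarrow> real \<Rightarrow> real" where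
  "uh N b \<epsilon> h x = (\<Sum>j=1..N+1. (-1) ^ (j + 1) * Uprof ((x - h j) / \<epsilon>)) + b \<epsilon> h x"

text \<open>h(xi) = (xi_1, ..., xi_N, h_{N+1}(xi)), with H the map h_{N+1} (depending on eps).\<close>
definition hxi :: "nat \<Rightarrow> (real \<Rightarrow> (nat \<Rightarrow> real) \<Rightarrow> real) \<Rightarrow> real \<Rightarrow> (nat \<Rightarrow> real) \<Rightarrow> (nat \<Rightarrow> real)" where
  "hxi N H \<epsilon> \<xi> = \<xi>(N + 1 := H \<epsilon> \<xi>)"

definition uxi where
  "uxi N b H \<epsilon> \<xi> x = uh N b \<epsilon> (hxi N H \<epsilon> \<xi>) x"

definition uxik where
  "uxik N b H \<epsilon> \<xi> k x = deriv (\<lambda>t. uxi N b H \<epsilon> (\<xi>(k := t)) x) (\<xi> k)"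

definition L2ip :: "(real \<Rightarrow> real) \<Rightarrow> (real \<Rightarrow> real) \<Rightarrow> real" where
  "L2ip f g = integral {0..1} (\<lambda>x. f x * g x)"

end

theory Submission
  imports Defs
begin

definition Up :: "real \<Rightarrow> real" where "Up y = (1 - (tanh (y / sqrt 2))\<^sup>2) / sqrt 2"
definition Fp :: "real \<Rightarrow> real" where "Fp y = (tanh (y / sqrt 2) - (tanh (y / sqrt 2))^3 / 3) / sqrt 2"
definition Finf :: real where "Finf = 2 / (3 * sqrt 2)"

lemma sqrt2_facts: "sqrt 2 * sqrt 2 = (2::real)" "sqrt (2::real) \<ge> 1" "sqrt (2::real) > 0"
  by auto

lemma Uprof_deriv: "(Uprof has_real_derivative Up y) (at y)"
  unfolding Uprof_def Up_def
  by (auto intro!: derivative_eq_intros simp: cosh_real_pos[THEN less_imp_neq, symmetric] field_simps)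

lemma Fp_deriv: "(Fp has_real_derivative (Up y)\<^sup>2) (at y)"
proof -
  have e: "Fp = (\<lambda>y. (Uprof y - Uprof y ^ 3 / 3) / sqrt 2)"
    unfolding Fp_def Uprof_def by auto
  have "((\<lambda>y. (Uprof y - Uprof y ^ 3 / 3) / sqrt 2) has_real_derivative
     (Up y - (of_nat 3 * (Up y * Uprof y ^ (3 - Suc 0))) / 3) / sqrt 2) (at y)"
    by (intro DERIV_cdivide DERIV_diff DERIV_power Uprof_deriv)
  moreover have "(Up y - (of_nat 3 * (Up y * Uprof y ^ (3 - Suc 0))) / 3) / sqrt 2 = (Up y)\<^sup>2"
  proof -
    have h: "(1 - (Uprof y)\<^sup>2) / sqrt 2 = Up y" unfolding Up_def Uprof_def ..
    have "(Up y - (of_nat 3 * (Up y * Uprof y ^ (3 - Suc 0))) / 3) / sqrt 2 = Up y * ((1 - (Uprof y)\<^sup>2) / sqrt 2)"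
      by (simp add: field_simps power2_eq_square)
    then show ?thesis unfolding h by (simp add: power2_eq_square)
  qed
  ultimately show ?thesis using e by simp
qed

lemma tanh_w: fixes z :: real shows "tanh z = (1 - exp (-2*z)) / (1 + exp (-2*z))"
  by (rule tanh_real_altdef)

lemma sech_bound: fixes z :: real shows "1 - (tanh z)\<^sup>2 \<le> 4 * exp (-2 * \<bar>z\<bar>)"
proof -
  define w where "w = exp (-2 * \<bar>z\<bar>)"
  have w: "w > 0" unfolding w_def by simp
  have t2: "(tanh z)\<^sup>2 = (tanh \<bar>z\<bar>)\<^sup>2" by (simp add: tanh_real_abs)
  have t1: "tanh \<bar>z\<bar> = (1 - w) / (1 + w)" unfolding w_def by (rule tanh_real_altdef)
  moreover have "1 - ((1 - w) / (1 + w))\<^sup>2 = 4 * w / (1 + w)\<^sup>2"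
  proof -
    have "1 + w \<noteq> 0" using w by simp
    then show ?thesis by (simp add: field_simps) (simp add: power2_eq_square algebra_simps)
  qed
  ultimately have "1 - (tanh z)\<^sup>2 = 4 * w / (1 + w)\<^sup>2" using t2 t1 by simp
  also have "\<dots> \<le> 4 * w"
  proof -
    have "1 \<le> (1 + w)\<^sup>2" using w by (simp add: power2_eq_square algebra_simps)
    then show ?thesis using w by (simp add: divide_le_eq mult_le_cancel_left1)
  qed
  finally show ?thesis unfolding w_def .
qed

lemma one_minus_tanh: fixes z :: real shows "1 - tanh z \<le> 2 * exp (-2 * z)" "0 \<le> 1 - tanh z"
proof -
  define w where "w = exp (-2 * z)"
  have w: "w > 0" unfolding w_def by simp
  have "tanh z = (1 - w) / (1 + w)" unfolding w_def by (rule tanh_real_altdef)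
  then have "1 - tanh z = 2 * w / (1 + w)" using w by (simp add: field_simps)
  also have "\<dots> \<le> 2 * w" using w by (simp add: field_simps)
  finally show "1 - tanh z \<le> 2 * exp (-2 * z)" unfolding w_def .
  show "0 \<le> 1 - tanh z" using tanh_real_lt_1[of z] by simp
qed

lemma Up_nonneg: "0 \<le> Up y"
  unfolding Up_def using tanh_real_bounds[of "y / sqrt 2"]
  by (auto simp: abs_square_le_1 power2_eq_square abs_less_iff intro!: divide_nonneg_pos)
    (smt (verit) mult_le_one mult_minus_left mult_minus_right)

lemma Up_le1: "Up y \<le> 1"
proof -
  have "1 - (tanh (y / sqrt 2))\<^sup>2 \<le> 1" by simp
  also have "1 \<le> sqrt (2::real)" by simp
  finally show ?thesis unfolding Up_def by (simp add: divide_le_eq)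
qed

lemma Up_exp: "Up y \<le> 4 * exp (- \<bar>y\<bar>)"
proof -
  have "Up y \<le> 1 - (tanh (y / sqrt 2))\<^sup>2"
  proof -
    have "0 \<le> 1 - (tanh (y / sqrt 2))\<^sup>2" using Up_nonneg[of y] unfolding Up_def
      by (simp add: zero_le_divide_iff)
    then show ?thesis unfolding Up_def using sqrt2_facts(2)
      by (simp add: divide_le_eq mult_le_cancel_left1)
  qed
  also have "\<dots> \<le> 4 * exp (-2 * \<bar>y / sqrt 2\<bar>)" by (rule sech_bound)
  also have "\<dots> \<le> 4 * exp (- \<bar>y\<bar>)"
  proof -
    have "2 * \<bar>y / sqrt 2\<bar> = sqrt 2 * \<bar>y\<bar>"
      by (simp add: abs_divide field_simps)
    also have "\<dots> \<ge> \<bar>y\<bar>" using sqrt2_facts(2) by (simp add: mult_le_cancel_right1)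
    finally show ?thesis by simp
  qed
  finally show ?thesis .
qed
lemma Fp_odd: "Fp (-y) = - Fp y"
  unfolding Fp_def by (simp add: field_simps)


lemma Fp_tail: assumes y: "0 \<le> y" shows "0 \<le> Finf - Fp y" "Finf - Fp y \<le> 4 * exp (- y)"
proof -
  define T where "T = tanh (y / sqrt 2)"
  define s where "s = sqrt (2::real)"
  have s: "s * s = 2" "s \<ge> 1" unfolding s_def by auto
  have T: "-1 < T" "T < 1" unfolding T_def using tanh_real_bounds by auto
  have eq: "Finf - Fp y = (1 - T)\<^sup>2 * (2 + T) / (3 * s)"
  proof -
    have "Finf - Fp y = 2 / (3 * s) - (T - T^3/3)/s" unfolding Fp_def Finf_def T_def s_def ..
    also have "\<dots> = (2 - 3 * T + T^3) / (3 * s)" using s by (simp add: field_simps)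
    also have "2 - 3 * T + T^3 = (1 - T)\<^sup>2 * (2 + T)" by (simp add: algebra_simps power2_eq_square power3_eq_cube)
    finally show ?thesis .
  qed
  show "0 \<le> Finf - Fp y" unfolding eq using T s by simp
  have d: "1 - T \<le> 2 * exp (-2 * (y / sqrt 2))" unfolding T_def by (rule one_minus_tanh)
  have "2 * (y / sqrt 2) = sqrt 2 * y"
    by (simp add: field_simps)
  also have "\<dots> \<ge> y" using y by (simp add: mult_le_cancel_right1)
  finally have "exp (-2 * (y / sqrt 2)) \<le> exp (- y)" by simp
  then have d2: "1 - T \<le> 2 * exp (- y)" using d by linarith
  have "(1 - T)\<^sup>2 * (2 + T) \<le> (2 * (1 - T)) * 3"
  proof -
    have "(1 - T) * (1 - T) \<le> 2 * (1 - T)" by (rule mult_right_mono) (use T in auto)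
    then have "(1 - T)\<^sup>2 \<le> 2 * (1 - T)" by (simp add: power2_eq_square)
    moreover have "2 + T \<le> 3" using T by simp
    ultimately show ?thesis using T by (intro mult_mono) auto
  qed
  then have "Finf - Fp y \<le> (2 * (1 - T)) * 3 / (3 * s)" unfolding eq using s
    by (intro divide_right_mono) auto
  also have "\<dots> = 2 * (1 - T) / s" using s by (simp add: field_simps)
  also have "\<dots> \<le> 2 * (1 - T)"
  proof -
    have "2 * (1 - T) \<le> 2 * (1 - T) * s" using s T by (simp add: mult_le_cancel_left1)
    then show ?thesis using s by (simp add: divide_le_eq)
  qed
  also have "\<dots> \<le> 4 * exp (- y)" using d2 by simp
  finally show "Finf - Fp y \<le> 4 * exp (- y)" .
qed

lemma Fp_tail_neg: assumes y: "0 \<le> y" shows "0 \<le> Fp (-y) + Finf" "Fp (-y) + Finf \<le> 4 * exp (- y)"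
  using Fp_tail[OF y] by (simp_all add: Fp_odd)
lemma deriv_Uprof: "deriv Uprof = Up"
  using Uprof_deriv DERIV_imp_deriv by blast

lemma tanh_scaled_top: "((\<lambda>y. tanh (y / sqrt 2)) \<longlongrightarrow> (1::real)) at_top"
proof -
  have "filterlim (\<lambda>y::real. (1 / sqrt 2) * y) at_top at_top"
    by (rule filterlim_tendsto_pos_mult_at_top[OF tendsto_const _ filterlim_ident]) simp
  then have "filterlim (\<lambda>y::real. y / sqrt 2) at_top at_top" by simp
  then show ?thesis by (rule filterlim_compose[OF tanh_real_at_top])
qed

lemma tanh_scaled_bot: "((\<lambda>y. tanh (y / sqrt 2)) \<longlongrightarrow> (-1::real)) at_bot"
proof -
  have "filterlim (\<lambda>y::real. (1 / sqrt 2) * y) at_bot at_bot"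
    by (rule filterlim_tendsto_pos_mult_at_bot[OF tendsto_const _ filterlim_ident]) simp
  then have "filterlim (\<lambda>y::real. y / sqrt 2) at_bot at_bot" by simp
  then show ?thesis by (rule filterlim_compose[OF tanh_real_at_bot])
qed

lemma Xconst_val: "Xconst = 2 * Finf"
proof -
  have lim1: "(Fp \<longlongrightarrow> Finf) at_top"
  proof -
    have "((\<lambda>y. (tanh (y / sqrt 2) - (tanh (y / sqrt 2))^3 / 3) / sqrt 2) \<longlongrightarrow> (1 - 1^3/3) / sqrt 2) at_top"
      by (intro tendsto_intros tanh_scaled_top) auto
    moreover have "(1 - 1^3/3) / sqrt 2 = Finf" unfolding Finf_def by simp
    moreover have "(\<lambda>y. (tanh (y / sqrt 2) - (tanh (y / sqrt 2))^3 / 3) / sqrt 2) = Fp"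
      unfolding Fp_def[abs_def] ..
    ultimately show ?thesis by simp
  qed
  have lim2: "(Fp \<longlongrightarrow> - Finf) at_bot"
  proof -
    have "((\<lambda>y. (tanh (y / sqrt 2) - (tanh (y / sqrt 2))^3 / 3) / sqrt 2) \<longlongrightarrow> ((-1) - (-1)^3/3) / sqrt 2) at_bot"
      by (intro tendsto_intros tanh_scaled_bot) auto
    moreover have "((-1) - (-1)^3/3) / sqrt 2 = - Finf" unfolding Finf_def by simp
    moreover have "(\<lambda>y. (tanh (y / sqrt 2) - (tanh (y / sqrt 2))^3 / 3) / sqrt 2) = Fp"
      unfolding Fp_def[abs_def] ..
    ultimately show ?thesis by simp
  qed
  have cont: "isCont (\<lambda>y. (Up y)\<^sup>2) x" for x
    unfolding Up_def by (intro continuous_intros) (auto simp: cosh_real_pos[THEN less_imp_neq, symmetric])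
  have FTC: "set_integrable lborel (einterval (-\<infinity>) \<infinity>) (\<lambda>y. (Up y)\<^sup>2)"
     "(LBINT y=-\<infinity>..\<infinity>. (Up y)\<^sup>2) = Finf - (- Finf)"
    by (rule interval_integral_FTC_nonneg[where F = Fp and A = "- Finf" and B = Finf]; 
        auto simp: ereal_tendsto_simps Fp_deriv cont lim1 lim2)+
  have "integral UNIV (\<lambda>y. (Up y)\<^sup>2) = (LINT y:UNIV|lborel. (Up y)\<^sup>2)"
    using set_borel_integral_eq_integral(2)[OF FTC(1)] by (simp add: einterval_eq_UNIV)
  also have "\<dots> = (LBINT y=-\<infinity>..\<infinity>. (Up y)\<^sup>2)"
    by (simp add: interval_lebesgue_integral_def einterval_eq_UNIV)
  finally show ?thesis unfolding Xconst_def deriv_Uprof using FTC(2) by simp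
qed
lemma asym:
  fixes a \<kappa> :: real assumes a: "a > 0" and k: "\<kappa> > 0"
  shows "\<exists>e>0. \<forall>\<epsilon>. 0 < \<epsilon> \<and> \<epsilon> < e \<longrightarrow>
     exp (- a / \<epsilon> powr \<kappa>) \<le> \<epsilon>\<^sup>2 * exp (- (a/2) / \<epsilon> powr \<kappa>)"
proof -
  define e where "e = ((a * \<kappa> / 8)\<^sup>2) powr (1 / \<kappa>)"
  have e: "e > 0" unfolding e_def using a k by simp
  have "\<forall>\<epsilon>. 0 < \<epsilon> \<and> \<epsilon> < e \<longrightarrow>
     exp (- a / \<epsilon> powr \<kappa>) \<le> \<epsilon>\<^sup>2 * exp (- (a/2) / \<epsilon> powr \<kappa>)"
  proof (intro allI impI)
    fix \<epsilon> :: real assume "0 < \<epsilon> \<and> \<epsilon> < e"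
    then have ep: "0 < \<epsilon>" "\<epsilon> < e" by auto
    define z where "z = \<epsilon> powr \<kappa>"
    have z0: "z > 0" unfolding z_def using ep by simp
    have "z < e powr \<kappa>" unfolding z_def using ep k by (intro powr_less_mono2) auto
    also have "e powr \<kappa> = (a * \<kappa> / 8)\<^sup>2" unfolding e_def using a k
      by (simp add: powr_powr)
    finally have zlt: "z < (a * \<kappa> / 8)\<^sup>2" .
    define y where "y = 1 / z"
    have y0: "y > 0" unfolding y_def using z0 by simp
    define s where "s = sqrt y"
    have s0: "s > 0" unfolding s_def using y0 by simp
    have ys: "y = s\<^sup>2" unfolding s_def using y0 by simp
    have "(8 / (a * \<kappa>))\<^sup>2 < y"
    proof -
      have "(8 / (a * \<kappa>))\<^sup>2 = 1 / (a * \<kappa> / 8)\<^sup>2" by (simp add: power_divide)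
      also have "\<dots> < 1 / z" using zlt z0 a k by (intro divide_strict_left_mono) (auto simp: zero_less_mult_iff)
      finally show ?thesis unfolding y_def .
    qed
    then have s8: "8 / (a * \<kappa>) < s" unfolding ys using s0 a k
      by (meson less_le_trans power2_less_imp_less s0 less_imp_le)
    have lny: "ln y = - \<kappa> * ln \<epsilon>" unfolding y_def z_def using ep
      by (simp add: ln_div ln_powr)
    have "ln y = 2 * ln s" unfolding ys using s0 by (simp add: ln_realpow)
    also have "\<dots> < 2 * s" using s0 ln_less_self by auto
    finally have "- ln \<epsilon> < 2 * s / \<kappa>" unfolding lny using k by (simp add: field_simps)
    then have l1: "- 2 * ln \<epsilon> < 4 * s / \<kappa>" by simp
    have "4 * s / \<kappa> \<le> (a / 2) * s\<^sup>2"
    proof -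
      have "8 \<le> s * (a * \<kappa>)" using s8 a k by (simp add: field_simps)
      then have "4 * s \<le> (a / 2) * s\<^sup>2 * \<kappa>" using s0
        by (simp add: power2_eq_square field_simps)
      then show ?thesis using k by (simp add: divide_le_eq)
    qed
    then have "- (a/2) * y \<le> 2 * ln \<epsilon>" using l1 ys by simp
    then have "exp (- (a/2) * y) \<le> \<epsilon>\<^sup>2"
    proof -
      have "\<epsilon>\<^sup>2 = exp (2 * ln \<epsilon>)" using ep by (simp add: exp_double)
      then show ?thesis using \<open>- (a/2) * y \<le> 2 * ln \<epsilon>\<close> by simp
    qed
    then have A: "exp (- (a/2) * y) * exp (- (a/2) * y) \<le> \<epsilon>\<^sup>2 * exp (- (a/2) * y)"
      by (simp add: mult_right_mono)
    have B: "exp (- (a/2) * y) * exp (- (a/2) * y) = exp (- a * y)"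
      by (simp flip: exp_add)
    have f1: "exp (- a * y) \<le> \<epsilon>\<^sup>2 * exp (- (a/2) * y)"
      by (subst B[symmetric]) (rule A)
    have e1: "exp (- a / \<epsilon> powr \<kappa>) = exp (- a * y)" "exp (- (a/2) / \<epsilon> powr \<kappa>) = exp (- (a/2) * y)"
      unfolding y_def z_def by simp_all
    show "exp (- a / \<epsilon> powr \<kappa>) \<le> \<epsilon>\<^sup>2 * exp (- (a/2) / \<epsilon> powr \<kappa>)"
      unfolding e1 by (rule f1)
  qed
  then show ?thesis using e by blast
qed


definition psi :: "real \<Rightarrow> real \<Rightarrow> real \<Rightarrow> real" where
  "psi \<epsilon> a x = Up ((x - a) / \<epsilon>) / \<epsilon>"

lemma psi_nonneg: "\<epsilon> > 0 \<Longrightarrow> 0 \<le> psi \<epsilon> a x"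
  unfolding psi_def using Up_nonneg by simp

lemma psi_le: "\<epsilon> > 0 \<Longrightarrow> psi \<epsilon> a x \<le> 1 / \<epsilon>"
  unfolding psi_def using Up_le1 by (simp add: divide_right_mono)

lemma psi_exp: assumes "\<epsilon> > 0" "r \<le> \<bar>x - a\<bar>"
  shows "psi \<epsilon> a x \<le> 4 / \<epsilon> * exp (- r / \<epsilon>)"
proof -
  have "Up ((x - a) / \<epsilon>) \<le> 4 * exp (- \<bar>(x - a) / \<epsilon>\<bar>)" by (rule Up_exp)
  also have "\<dots> \<le> 4 * exp (- r / \<epsilon>)"
    using assms by (simp add: abs_divide divide_right_mono)
  finally show ?thesis unfolding psi_def using assms by (simp add: divide_right_mono)
qed

lemma psi_cross: assumes e: "\<epsilon> > 0" and r: "2 * r \<le> \<bar>a - b\<bar>"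
  shows "psi \<epsilon> a x * psi \<epsilon> b x \<le> 4 / \<epsilon>\<^sup>2 * exp (- r / \<epsilon>)"
proof -
  have "r \<le> \<bar>x - a\<bar> \<or> r \<le> \<bar>x - b\<bar>" using r by linarith
  then show ?thesis
  proof
    assume "r \<le> \<bar>x - a\<bar>"
    then have "psi \<epsilon> a x * psi \<epsilon> b x \<le> (4 / \<epsilon> * exp (- r / \<epsilon>)) * (1 / \<epsilon>)"
      using e psi_exp psi_le psi_nonneg by (intro mult_mono) auto
    then show ?thesis by (simp add: power2_eq_square)
  next
    assume "r \<le> \<bar>x - b\<bar>"
    then have "psi \<epsilon> a x * psi \<epsilon> b x \<le> (1 / \<epsilon>) * (4 / \<epsilon> * exp (- r / \<epsilon>))"
      using e psi_exp psi_le psi_nonneg by (intro mult_mono) auto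
    then show ?thesis by (simp add: power2_eq_square)
  qed
qed

lemma psi_cont: "\<epsilon> > 0 \<Longrightarrow> continuous_on S (psi \<epsilon> a)"
  unfolding psi_def Up_def
  by (intro continuous_intros) (auto simp: cosh_real_pos[THEN less_imp_neq, symmetric])

lemma psi_sq_integral: assumes e: "\<epsilon> > 0"
  shows "((\<lambda>x. (psi \<epsilon> a x)\<^sup>2) has_integral (Fp ((1 - a) / \<epsilon>) - Fp ((0 - a) / \<epsilon>)) / \<epsilon>) {0..1}"
proof -
  have "((\<lambda>x. (psi \<epsilon> a x)\<^sup>2) has_integral (Fp ((1 - a) / \<epsilon>) / \<epsilon> - Fp ((0 - a) / \<epsilon>) / \<epsilon>)) {0..1}"
  proof (rule fundamental_theorem_of_calculus)
    fix x :: real assume "x \<in> {0..1}"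
    have d1: "((\<lambda>x. (x - a) / \<epsilon>) has_real_derivative 1 / \<epsilon>) (at x)"
      using e by (auto intro!: derivative_eq_intros)
    have "((\<lambda>x. Fp ((x - a) / \<epsilon>) / \<epsilon>) has_real_derivative (Up ((x - a) / \<epsilon>))\<^sup>2 * (1 / \<epsilon>) / \<epsilon>) (at x)"
      by (intro DERIV_cdivide DERIV_chain2[OF Fp_deriv d1])
    moreover have "(Up ((x - a) / \<epsilon>))\<^sup>2 * (1 / \<epsilon>) / \<epsilon> = (psi \<epsilon> a x)\<^sup>2"
      unfolding psi_def by (simp add: power2_eq_square)
    ultimately show "((\<lambda>x. Fp ((x - a) / \<epsilon>) / \<epsilon>) has_vector_derivative (psi \<epsilon> a x)\<^sup>2) (at x within {0..1})"
      by (simp add: has_real_derivative_iff_has_vector_derivative[symmetric] has_field_derivative_at_within)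
  qed simp
  then show ?thesis by (simp add: diff_divide_distrib)
qed

lemma psi_sq_est: assumes e: "\<epsilon> > 0" and L: "0 \<le> L" "L \<le> a / \<epsilon>" "L \<le> (1 - a) / \<epsilon>"
  shows "\<bar>integral {0..1} (\<lambda>x. (psi \<epsilon> a x)\<^sup>2) - Xconst / \<epsilon>\<bar> \<le> 8 / \<epsilon> * exp (- L)"
proof -
  have I: "integral {0..1} (\<lambda>x. (psi \<epsilon> a x)\<^sup>2) = (Fp ((1 - a) / \<epsilon>) - Fp ((0 - a) / \<epsilon>)) / \<epsilon>"
    using psi_sq_integral[OF e] by (rule integral_unique)
  define p where "p = (1 - a) / \<epsilon>"
  define q where "q = a / \<epsilon>"
  have q': "(0 - a) / \<epsilon> = - q" unfolding q_def by simp
  have p0: "0 \<le> p" "0 \<le> q" using L unfolding p_def q_def by auto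
  have t1: "0 \<le> Finf - Fp p" "Finf - Fp p \<le> 4 * exp (- p)" using Fp_tail[OF p0(1)] by auto
  have t2: "0 \<le> Fp (-q) + Finf" "Fp (-q) + Finf \<le> 4 * exp (- q)" using Fp_tail_neg[OF p0(2)] by auto
  have ep: "exp (- p) \<le> exp (- L)" "exp (- q) \<le> exp (- L)" using L unfolding p_def q_def by auto
  have "integral {0..1} (\<lambda>x. (psi \<epsilon> a x)\<^sup>2) - Xconst / \<epsilon> = ((Fp p - Finf) - (Fp (-q) + Finf)) / \<epsilon>"
    unfolding I Xconst_val p_def[symmetric] q' using e by (simp add: field_simps)
  also have "\<bar>\<dots>\<bar> = \<bar>(Fp p - Finf) - (Fp (-q) + Finf)\<bar> / \<epsilon>" using e by simp
  also have "\<dots> \<le> (8 * exp (- L)) / \<epsilon>"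
  proof (rule divide_right_mono)
    show "\<bar>(Fp p - Finf) - (Fp (-q) + Finf)\<bar> \<le> 8 * exp (- L)" using t1 t2 ep by arith
  qed (use e in simp)
  finally show ?thesis by simp
qed

lemma sign_lemma: "k \<le> N \<Longrightarrow> (-1::real) ^ (N + 1) * (-1) ^ (N - k) = - ((-1) ^ k)"
proof -
  assume "k \<le> N"
  then obtain m where N: "N = k + m" using le_Suc_ex by blast
  have "(-1::real) ^ (N + 1) * (-1) ^ (N - k) = (-1) ^ k * (-1) * ((-1) ^ m * (-1) ^ m)"
    unfolding N by (simp add: power_add)
  also have "(-1::real) ^ m * (-1) ^ m = 1" by (simp flip: power_add) 
  finally show ?thesis by simp
qed

lemma AP_bound:
  fixes p q h \<tau> :: real
  assumes nn: "0 \<le> p" "0 \<le> q" "0 \<le> h"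
    and ph: "p * h \<le> \<tau>" and hq: "h * q \<le> \<tau>" and pq: "k \<noteq> j \<Longrightarrow> p * q \<le> \<tau>"
    and eq: "k = j \<Longrightarrow> p = q"
  shows "\<bar>((-1) ^ k * (p - h)) * ((-1) ^ j * (q - h)) - ((if k = j then p\<^sup>2 else 0) + (-1) ^ (k + j) * h\<^sup>2)\<bar> \<le> 3 * \<tau>"
proof (cases "k = j")
  case True
  have s: "(-1::real) ^ k * (-1) ^ k = 1" by (simp flip: power_add)
  have "((-1) ^ k * (p - h)) * ((-1) ^ j * (q - h)) - ((if k = j then p\<^sup>2 else 0) + (-1) ^ (k + j) * h\<^sup>2)
      = ((-1) ^ k * (-1) ^ k) * ((p - h) * (p - h)) - p\<^sup>2 - ((-1) ^ k * (-1) ^ k) * h\<^sup>2"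
    using True eq by (simp add: power_add algebra_simps)
  also have "\<dots> = - 2 * (p * h)" unfolding s by (simp add: power2_eq_square algebra_simps)
  moreover have ph0: "0 \<le> p * h" using nn by simp
  ultimately show ?thesis using ph by simp
next
  case False
  have "((-1) ^ k * (p - h)) * ((-1) ^ j * (q - h)) - ((if k = j then p\<^sup>2 else 0) + (-1) ^ (k + j) * h\<^sup>2)
      = (-1) ^ (k + j) * (p * q - p * h - h * q)"
    using False by (simp add: power_add algebra_simps power2_eq_square)
  also have "\<bar>\<dots>\<bar> = \<bar>p * q - p * h - h * q\<bar>" by (simp add: abs_mult)
  also have "\<dots> \<le> 3 * \<tau>"
  proof -
    have "0 \<le> p * q" "0 \<le> p * h" "0 \<le> h * q" using nn by simp_all
    then show ?thesis using pq[OF False] ph hq by (simp add: abs_le_iff)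
  qed
  finally show ?thesis .
qed

lemma prod_bound:
  fixes A A' E E' P \<alpha> e \<beta> :: real
  assumes "\<bar>A\<bar> \<le> \<alpha>" "\<bar>A'\<bar> \<le> \<alpha>" "\<bar>E\<bar> \<le> e" "\<bar>E'\<bar> \<le> e" "\<bar>A * A' - P\<bar> \<le> \<beta>"
  shows "\<bar>(A + E) * (A' + E') - P\<bar> \<le> \<beta> + 2 * \<alpha> * e + e\<^sup>2"
proof -
  have "(A + E) * (A' + E') - P = (A * A' - P) + A * E' + E * A' + E * E'" by (simp add: algebra_simps)
  moreover have "\<bar>A * E'\<bar> \<le> \<alpha> * e" unfolding abs_mult using assms by (intro mult_mono) auto
  moreover have "\<bar>E * A'\<bar> \<le> \<alpha> * e" unfolding abs_mult using assms by (subst mult.commute) (intro mult_mono, auto)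
  moreover have "\<bar>E * E'\<bar> \<le> e * e" unfolding abs_mult using assms by (intro mult_mono) auto
  moreover have "2 * \<alpha> * e = \<alpha> * e + \<alpha> * e" by simp
  ultimately show ?thesis using assms(5) by (simp add: power2_eq_square abs_le_iff)
qed



lemma Omega_mono:
  assumes O: "Omega N \<kappa> \<epsilon> h" and ij: "1 \<le> i" "i \<le> j" "j \<le> N + 1"
  shows "h i \<le> h j"
  using ij
proof (induction j)
  case 0 then show ?case by simp
next
  case (Suc j)
  show ?case
  proof (cases "i = Suc j")
    case True then show ?thesis by simp
  next
    case False
    then have "i \<le> j" using Suc by simp
    then have "h i \<le> h j" using Suc by simp
    moreover have "h j < h (j + 1)" using O Suc \<open>i \<le> j\<close> unfolding Omega_def by auto
    ultimately show ?thesis by simp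
  qed
qed

lemma Omega_sep:
  assumes O: "Omega N \<kappa> \<epsilon> h" and ij: "1 \<le> i" "i < j" "j \<le> N + 1"
  shows "\<epsilon> / \<epsilon> powr \<kappa> < h j - h i"
proof -
  have i: "i \<in> {0..N+1}" "i \<in> {1..N}" using ij by auto
  have "\<bar>hext N h (i + 1) - hext N h i\<bar> > \<epsilon> / \<epsilon> powr \<kappa>" using O i unfolding Omega_def by blast
  moreover have "hext N h (i + 1) = h (i + 1)" "hext N h i = h i" using ij unfolding hext_def by auto
  moreover have "h i < h (i + 1)" using O i unfolding Omega_def by blast
  moreover have "h (i + 1) \<le> h j" using Omega_mono[OF O, of "i + 1" j] ij by simp
  ultimately show ?thesis by simp
qed

lemma Omega_bdry:
  assumes O: "Omega N \<kappa> \<epsilon> h" and i: "1 \<le> i" "i \<le> N + 1"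
  shows "\<epsilon> / \<epsilon> powr \<kappa> / 2 < h i" "\<epsilon> / \<epsilon> powr \<kappa> / 2 < 1 - h i"
proof -
  have "\<bar>hext N h (0 + 1) - hext N h 0\<bar> > \<epsilon> / \<epsilon> powr \<kappa>" using O unfolding Omega_def by auto
  moreover have "hext N h (0 + 1) = h 1" "hext N h 0 = - h 1" unfolding hext_def by auto
  moreover have "0 < h 1" using O unfolding Omega_def by auto
  ultimately have "\<epsilon> / \<epsilon> powr \<kappa> / 2 < h 1" by simp
  moreover have "h 1 \<le> h i" using Omega_mono[OF O, of 1 i] i by simp
  ultimately show "\<epsilon> / \<epsilon> powr \<kappa> / 2 < h i" by simp
  have "\<bar>hext N h ((N + 1) + 1) - hext N h (N + 1)\<bar> > \<epsilon> / \<epsilon> powr \<kappa>" using O unfolding Omega_def by auto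
  moreover have "hext N h ((N + 1) + 1) = 2 - h (N + 1)" "hext N h (N + 1) = h (N + 1)" unfolding hext_def by auto
  moreover have "h (N + 1) < 1" using O unfolding Omega_def by auto
  ultimately have "\<epsilon> / \<epsilon> powr \<kappa> / 2 < 1 - h (N + 1)" by simp
  moreover have "h i \<le> h (N + 1)" using Omega_mono[OF O, of i "N + 1"] i by simp
  ultimately show "\<epsilon> / \<epsilon> powr \<kappa> / 2 < 1 - h i" by simp
qed

lemma hext_tendsto:
  assumes "\<And>j. ((\<lambda>t. g t j) \<longlongrightarrow> g0 j) F"
  shows "((\<lambda>t. hext N (g t) j) \<longlongrightarrow> hext N g0 j) F"
  unfolding hext_def by (cases "j = 0"; cases "j = N + 2") (auto intro!: tendsto_intros assms)

lemma Omega_eventually: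
  assumes O: "Omega N \<kappa> \<epsilon> g0" and lim: "\<And>j. ((\<lambda>t. g t j) \<longlongrightarrow> g0 j) F"
  shows "eventually (\<lambda>t. Omega N \<kappa> \<epsilon> (g t)) F"
proof -
  have O': "0 < g0 1" "\<forall>j\<in>{1..N}. g0 j < g0 (j + 1)" "g0 (N + 1) < 1"
    "\<forall>j\<in>{0..N+1}. \<bar>hext N g0 (j + 1) - hext N g0 j\<bar> > \<epsilon> / \<epsilon> powr \<kappa>"
    using O unfolding Omega_def by auto
  have e1: "eventually (\<lambda>t. 0 < g t 1) F" using O'(1) lim order_tendstoD(1) by blast
  have e2: "eventually (\<lambda>t. \<forall>j\<in>{1..N}. g t j < g t (j + 1)) F"
  proof (rule eventually_ball_finite[OF finite_atLeastAtMost], rule ballI)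
    fix j assume "j \<in> {1..N}"
    have "((\<lambda>t. g t (j + 1) - g t j) \<longlongrightarrow> g0 (j + 1) - g0 j) F" by (intro tendsto_intros lim)
    moreover have "0 < g0 (j + 1) - g0 j" using O'(2) \<open>j \<in> {1..N}\<close> by auto
    ultimately have "eventually (\<lambda>t. 0 < g t (j + 1) - g t j) F" by (rule order_tendstoD(1))
    then show "eventually (\<lambda>t. g t j < g t (j + 1)) F" by (rule eventually_mono) simp
  qed
  have e3: "eventually (\<lambda>t. g t (N + 1) < 1) F" using O'(3) lim order_tendstoD(2) by blast
  have e4: "eventually (\<lambda>t. \<forall>j\<in>{0..N+1}. \<bar>hext N (g t) (j + 1) - hext N (g t) j\<bar> > \<epsilon> / \<epsilon> powr \<kappa>) F"
  proof (rule eventually_ball_finite[OF finite_atLeastAtMost], rule ballI)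
    fix j assume "j \<in> {0..N+1}"
    have "((\<lambda>t. \<bar>hext N (g t) (j + 1) - hext N (g t) j\<bar>) \<longlongrightarrow> \<bar>hext N g0 (j + 1) - hext N g0 j\<bar>) F"
      by (intro tendsto_intros hext_tendsto lim)
    then show "eventually (\<lambda>t. \<bar>hext N (g t) (j + 1) - hext N (g t) j\<bar> > \<epsilon> / \<epsilon> powr \<kappa>) F"
      using O'(4) \<open>j \<in> {0..N+1}\<close> by (intro order_tendstoD(1)) auto
  qed
  show ?thesis using e1 e2 e3 e4 unfolding Omega_def by eventually_elim auto
qed

definition clamp :: "real \<Rightarrow> real \<Rightarrow> real" where "clamp M v = max (- M) (min M v)"

lemma integrable_prod_limit:
  fixes Q R :: "nat \<Rightarrow> real \<Rightarrow> real" and f g :: "real \<Rightarrow> real"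
  assumes cQ: "\<And>n. continuous_on {0..1} (Q n)" and cR: "\<And>n. continuous_on {0..1} (R n)"
    and lQ: "\<And>x. x \<in> {0..1} \<Longrightarrow> (\<lambda>n. Q n x) \<longlonglongrightarrow> f x"
    and lR: "\<And>x. x \<in> {0..1} \<Longrightarrow> (\<lambda>n. R n x) \<longlonglongrightarrow> g x"
    and bf: "\<And>x. x \<in> {0..1} \<Longrightarrow> \<bar>f x\<bar> \<le> M" and bg: "\<And>x. x \<in> {0..1} \<Longrightarrow> \<bar>g x\<bar> \<le> M"
  shows "(\<lambda>x. f x * g x) integrable_on {0..1}"
proof -
  have M: "0 \<le> M" using bf[of 0] by simp
  define W where "W n x = clamp M (Q n x) * clamp M (R n x)" for n x
  have "(\<lambda>x. clamp M (f x) * clamp M (g x)) integrable_on {0..1}"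
  proof (rule dominated_convergence(1))
    show "W n integrable_on {0..1}" for n
      unfolding W_def clamp_def
      by (intro integrable_continuous_interval continuous_intros cQ cR)
    show "(\<lambda>x::real. M * M) integrable_on {0..1}" by (rule integrable_const_ivl)
    show "norm (W n x) \<le> M * M" if "x \<in> {0..1}" for n x
      unfolding W_def clamp_def real_norm_def abs_mult using M by (intro mult_mono) auto
    show "(\<lambda>n. W n x) \<longlonglongrightarrow> clamp M (f x) * clamp M (g x)" if "x \<in> {0..1}" for x
      unfolding W_def clamp_def by (intro tendsto_intros lQ lR that)
  qed
  moreover have "clamp M (f x) * clamp M (g x) = f x * g x" if "x \<in> {0..1}" for x
    using bf[OF that] bg[OF that] unfolding clamp_def by (auto simp: abs_le_iff)
  ultimately show ?thesis by (rule integrable_eq)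
qed

lemma deriv_seq:
  fixes f :: "real \<Rightarrow> real"
  assumes f: "(f has_real_derivative D) (at t0)" and d: "d \<longlonglongrightarrow> 0" and d0: "\<And>n. d n \<noteq> 0"
  shows "(\<lambda>n. (f (t0 + d n) - f t0) / d n) \<longlonglongrightarrow> D"
proof -
  have 1: "((\<lambda>y. (f y - f t0) / (y - t0)) \<longlongrightarrow> D) (at t0)"
    using f by (simp add: has_field_derivative_iff)
  have "((\<lambda>n. t0 + d n) \<longlongrightarrow> t0 + 0) sequentially" by (intro tendsto_intros d)
  then have 2: "filterlim (\<lambda>n. t0 + d n) (at t0) sequentially"
    using d0 by (auto simp: filterlim_at)
  have "((\<lambda>n. (f (t0 + d n) - f t0) / ((t0 + d n) - t0)) \<longlongrightarrow> D) sequentially"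
    by (rule filterlim_compose[OF 1 2])
  then show ?thesis by simp
qed



lemma hxi_upd: "k \<in> {1..N} \<Longrightarrow> hxi N H \<epsilon> (\<xi>(k := t)) j =
   (if j = N + 1 then H \<epsilon> (\<xi>(k := t)) else if j = k then t else \<xi> j)"
  unfolding hxi_def by auto

lemma uxi_split:
  assumes k: "k \<in> {1..N}"
  shows "uxi N b H \<epsilon> (\<xi>(k := t)) x =
    (\<Sum>j\<in>{1..N+1} - {k} - {N+1}. (-1) ^ (j + 1) * Uprof ((x - \<xi> j) / \<epsilon>))
    + (-1) ^ (k + 1) * Uprof ((x - t) / \<epsilon>)
    + (-1) ^ (N + 1 + 1) * Uprof ((x - H \<epsilon> (\<xi>(k := t))) / \<epsilon>)
    + b \<epsilon> (hxi N H \<epsilon> (\<xi>(k := t))) x"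
proof -
  define f where "f j = (-1) ^ (j + 1) * Uprof ((x - hxi N H \<epsilon> (\<xi>(k := t)) j) / \<epsilon>)" for j
  have kin: "k \<in> {1..N+1}" "N + 1 \<in> {1..N+1} - {k}" "k \<noteq> N + 1" using k by auto
  have "sum f {1..N+1} = f k + sum f ({1..N+1} - {k})" by (rule sum.remove) (use kin in auto)
  also have "sum f ({1..N+1} - {k}) = f (N + 1) + sum f ({1..N+1} - {k} - {N+1})"
    by (rule sum.remove) (use kin in auto)
  also have "sum f ({1..N+1} - {k} - {N+1}) = (\<Sum>j\<in>{1..N+1} - {k} - {N+1}. (-1) ^ (j + 1) * Uprof ((x - \<xi> j) / \<epsilon>))"
    by (rule sum.cong) (auto simp: f_def hxi_upd[OF k])
  finally have "sum f {1..N+1} = f k + (f (N + 1) + (\<Sum>j\<in>{1..N+1} - {k} - {N+1}. (-1) ^ (j + 1) * Uprof ((x - \<xi> j) / \<epsilon>)))" .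
  moreover have "f k = (-1) ^ (k + 1) * Uprof ((x - t) / \<epsilon>)" unfolding f_def using kin by (simp add: hxi_upd[OF k])
  moreover have "f (N + 1) = (-1) ^ (N + 1 + 1) * Uprof ((x - H \<epsilon> (\<xi>(k := t))) / \<epsilon>)"
    unfolding f_def by (simp add: hxi_upd[OF k])
  ultimately show ?thesis unfolding uxi_def uh_def f_def[symmetric] by simp
qed

lemma uxi_deriv:
  assumes e: "\<epsilon> > 0" and k: "k \<in> {1..N}"
    and Hd: "((\<lambda>t. H \<epsilon> (\<xi>(k := t))) has_real_derivative D) (at (\<xi> k))"
    and bd: "(\<lambda>t. b \<epsilon> (hxi N H \<epsilon> (\<xi>(k := t))) x) differentiable (at (\<xi> k))"
  shows "((\<lambda>t. uxi N b H \<epsilon> (\<xi>(k := t)) x) has_real_derivative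
     ((-1) ^ k * psi \<epsilon> (\<xi> k) x + (-1) ^ (N + 1) * D * psi \<epsilon> (H \<epsilon> \<xi>) x
      + deriv (\<lambda>t. b \<epsilon> (hxi N H \<epsilon> (\<xi>(k := t))) x) (\<xi> k))) (at (\<xi> k))"
proof -
  define S0 where "S0 = (\<Sum>j\<in>{1..N+1} - {k} - {N+1}. (-1) ^ (j + 1) * Uprof ((x - \<xi> j) / \<epsilon>))"
  define B where "B = (\<lambda>t. b \<epsilon> (hxi N H \<epsilon> (\<xi>(k := t))) x)"
  have eq: "(\<lambda>t. uxi N b H \<epsilon> (\<xi>(k := t)) x) = (\<lambda>t. S0 + (-1) ^ (k + 1) * Uprof ((x - t) / \<epsilon>)
    + (-1) ^ (N + 1 + 1) * Uprof ((x - H \<epsilon> (\<xi>(k := t))) / \<epsilon>) + B t)"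
    unfolding S0_def B_def using uxi_split[OF k] by auto
  have d1: "((\<lambda>t. (x - t) / \<epsilon>) has_real_derivative (- 1 / \<epsilon>)) (at (\<xi> k))"
    using e by (auto intro!: derivative_eq_intros)
  have d2: "((\<lambda>t. (x - H \<epsilon> (\<xi>(k := t))) / \<epsilon>) has_real_derivative (- D / \<epsilon>)) (at (\<xi> k))"
    using e by (auto intro!: derivative_eq_intros Hd)
  have dB: "(B has_real_derivative deriv B (\<xi> k)) (at (\<xi> k))"
    using bd unfolding B_def by (simp add: DERIV_deriv_iff_real_differentiable)
  have H0: "H \<epsilon> (\<xi>(k := \<xi> k)) = H \<epsilon> \<xi>" by simp
  have "((\<lambda>t. S0 + (-1) ^ (k + 1) * Uprof ((x - t) / \<epsilon>)
    + (-1) ^ (N + 1 + 1) * Uprof ((x - H \<epsilon> (\<xi>(k := t))) / \<epsilon>) + B t) has_real_derivative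
    0 + (-1) ^ (k + 1) * (Up ((x - \<xi> k) / \<epsilon>) * (- 1 / \<epsilon>))
    + (-1) ^ (N + 1 + 1) * (Up ((x - H \<epsilon> (\<xi>(k := \<xi> k))) / \<epsilon>) * (- D / \<epsilon>)) + deriv B (\<xi> k)) (at (\<xi> k))"
    by (intro DERIV_add DERIV_const DERIV_cmult DERIV_chain2[OF Uprof_deriv] d1 d2 dB)
  moreover have "0 + (-1) ^ (k + 1) * (Up ((x - \<xi> k) / \<epsilon>) * (- 1 / \<epsilon>))
    + (-1) ^ (N + 1 + 1) * (Up ((x - H \<epsilon> (\<xi>(k := \<xi> k))) / \<epsilon>) * (- D / \<epsilon>)) + deriv B (\<xi> k)
    = (-1) ^ k * psi \<epsilon> (\<xi> k) x + (-1) ^ (N + 1) * D * psi \<epsilon> (H \<epsilon> \<xi>) x + deriv B (\<xi> k)"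
    unfolding H0 psi_def by (simp add: algebra_simps)
  ultimately show ?thesis unfolding eq B_def by simp
qed

lemma uxi_cont:
  assumes e: "\<epsilon> > 0" and bd: "\<forall>x. b \<epsilon> (hxi N H \<epsilon> \<xi>') differentiable (at x)"
  shows "continuous_on S (\<lambda>x. uxi N b H \<epsilon> \<xi>' x)"
proof -
  have "continuous_on S (\<lambda>x. b \<epsilon> (hxi N H \<epsilon> \<xi>') x)"
    using bd by (intro continuous_at_imp_continuous_on ballI differentiable_imp_continuous_within) auto
  then show ?thesis unfolding uxi_def uh_def Uprof_def
    using e by (intro continuous_intros) (auto simp: cosh_real_pos[THEN less_imp_neq, symmetric])
qed



lemma uk_decomp:
  assumes e: "0 < \<epsilon>" and k: "k \<in> {1..N}" and Om: "Omega N \<kappa> \<epsilon> (hxi N H \<epsilon> \<xi>)"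
    and bhyp: "\<forall>h. Omega N \<kappa> \<epsilon> h \<longrightarrow> (\<forall>x. b \<epsilon> h differentiable (at x))"
    and bder: "\<forall>x\<in>{0..1}. (\<lambda>t. b \<epsilon> (hxi N H \<epsilon> (\<xi>(k := t))) x) differentiable (at (\<xi> k)) \<and>
         \<bar>deriv (\<lambda>t. b \<epsilon> (hxi N H \<epsilon> (\<xi>(k := t))) x) (\<xi> k)\<bar> \<le> Ec"
    and Hd: "((\<lambda>t. H \<epsilon> (\<xi>(k := t))) has_real_derivative D) (at (\<xi> k))"
    and HD: "\<bar>D - (-1) ^ (N - k)\<bar> \<le> Ec"
  shows "\<forall>x\<in>{0..1}. \<bar>uxik N b H \<epsilon> \<xi> k x - (-1) ^ k * (psi \<epsilon> (\<xi> k) x - psi \<epsilon> (H \<epsilon> \<xi>) x)\<bar> \<le> Ec / \<epsilon> + Ec"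
    and "\<exists>Q. (\<forall>n. continuous_on {0..1} (Q n)) \<and> (\<forall>x\<in>{0..1}. (\<lambda>n. Q n x) \<longlonglongrightarrow> uxik N b H \<epsilon> \<xi> k x)"
proof -
  define \<beta> where "\<beta> x = deriv (\<lambda>t. b \<epsilon> (hxi N H \<epsilon> (\<xi>(k := t))) x) (\<xi> k)" for x
  have der: "((\<lambda>t. uxi N b H \<epsilon> (\<xi>(k := t)) x) has_real_derivative
     ((-1) ^ k * psi \<epsilon> (\<xi> k) x + (-1) ^ (N + 1) * D * psi \<epsilon> (H \<epsilon> \<xi>) x + \<beta> x)) (at (\<xi> k))"
    if x: "x \<in> {0..1}" for x
    unfolding \<beta>_def using uxi_deriv[where H=H and \<xi>=\<xi> and k=k and N=N and b=b and x=x, OF e k Hd] bder x by blast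
  have uk: "uxik N b H \<epsilon> \<xi> k x = (-1) ^ k * psi \<epsilon> (\<xi> k) x + (-1) ^ (N + 1) * D * psi \<epsilon> (H \<epsilon> \<xi>) x + \<beta> x"
    if x: "x \<in> {0..1}" for x
    unfolding uxik_def using der[OF x] by (rule DERIV_imp_deriv)
  have kN: "k \<le> N" using k by simp
  show "\<forall>x\<in>{0..1}. \<bar>uxik N b H \<epsilon> \<xi> k x - (-1) ^ k * (psi \<epsilon> (\<xi> k) x - psi \<epsilon> (H \<epsilon> \<xi>) x)\<bar> \<le> Ec / \<epsilon> + Ec"
  proof
    fix x :: real assume x: "x \<in> {0..1}"
    have s: "(-1::real) ^ k = - ((-1) ^ (N + 1) * (-1) ^ (N - k))" using sign_lemma[OF kN] by simp
    have eq: "uxik N b H \<epsilon> \<xi> k x - (-1) ^ k * (psi \<epsilon> (\<xi> k) x - psi \<epsilon> (H \<epsilon> \<xi>) x)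
        = (-1) ^ (N + 1) * (D - (-1) ^ (N - k)) * psi \<epsilon> (H \<epsilon> \<xi>) x + \<beta> x"
      unfolding uk[OF x] s by (simp add: algebra_simps)
    have "\<bar>(-1) ^ (N + 1) * (D - (-1) ^ (N - k)) * psi \<epsilon> (H \<epsilon> \<xi>) x\<bar> \<le> Ec * (1 / \<epsilon>)"
    proof -
      have "\<bar>D - (-1) ^ (N - k)\<bar> * psi \<epsilon> (H \<epsilon> \<xi>) x \<le> Ec * (1 / \<epsilon>)"
        using HD psi_le[OF e] psi_nonneg[OF e] by (intro mult_mono) auto
      then show ?thesis unfolding abs_mult using psi_nonneg[OF e] by simp
    qed
    moreover have "\<bar>\<beta> x\<bar> \<le> Ec" unfolding \<beta>_def using bder x by blast
    ultimately show "\<bar>uxik N b H \<epsilon> \<xi> k x - (-1) ^ k * (psi \<epsilon> (\<xi> k) x - psi \<epsilon> (H \<epsilon> \<xi>) x)\<bar> \<le> Ec / \<epsilon> + Ec"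
      unfolding eq by simp
  qed
  define g where "g t = hxi N H \<epsilon> (\<xi>(k := t))" for t
  have g0: "g (\<xi> k) = hxi N H \<epsilon> \<xi>" unfolding g_def by simp
  have Hc: "((\<lambda>t. H \<epsilon> (\<xi>(k := t))) \<longlongrightarrow> H \<epsilon> (\<xi>(k := \<xi> k))) (at (\<xi> k))"
    using DERIV_isCont[OF Hd] unfolding isCont_def by simp
  have glim: "((\<lambda>t. g t j) \<longlongrightarrow> g (\<xi> k) j) (at (\<xi> k))" for j
    unfolding g_def hxi_upd[OF k] using Hc by auto
  have ev: "eventually (\<lambda>t. Omega N \<kappa> \<epsilon> (g t)) (at (\<xi> k))"
    by (rule Omega_eventually[OF _ glim]) (use Om g0 in simp)
  have "((\<lambda>n. \<xi> k + 1 / real (Suc n)) \<longlongrightarrow> \<xi> k + 0) sequentially"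
    by (intro tendsto_intros LIMSEQ_Suc[OF lim_1_over_n])
  then have "filterlim (\<lambda>n. \<xi> k + 1 / real (Suc n)) (at (\<xi> k)) sequentially"
    by (auto simp: filterlim_at)
  then have "eventually (\<lambda>n. Omega N \<kappa> \<epsilon> (g (\<xi> k + 1 / real (Suc n)))) sequentially"
    using ev by (auto simp: filterlim_iff)
  then obtain M where M: "\<And>n. n \<ge> M \<Longrightarrow> Omega N \<kappa> \<epsilon> (g (\<xi> k + 1 / real (Suc n)))"
    by (auto simp: eventually_sequentially)
  define d where "d n = 1 / real (Suc (n + M))" for n
  have d0: "d n \<noteq> 0" for n unfolding d_def by simp
  have dlim: "d \<longlonglongrightarrow> 0"
    unfolding d_def using LIMSEQ_ignore_initial_segment[OF LIMSEQ_Suc[OF lim_1_over_n], of M] by simp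
  have Omd: "Omega N \<kappa> \<epsilon> (hxi N H \<epsilon> (\<xi>(k := \<xi> k + d n)))" for n
    using M[of "n + M"] unfolding g_def d_def by simp
  define Q where "Q n x = (uxi N b H \<epsilon> (\<xi>(k := \<xi> k + d n)) x - uxi N b H \<epsilon> (\<xi>(k := \<xi> k)) x) / d n" for n x
  show "\<exists>Q. (\<forall>n. continuous_on {0..1} (Q n)) \<and> (\<forall>x\<in>{0..1}. (\<lambda>n. Q n x) \<longlonglongrightarrow> uxik N b H \<epsilon> \<xi> k x)"
  proof (intro exI[of _ Q] conjI allI ballI)
    fix n
    have c1: "continuous_on {0..1} (\<lambda>x. uxi N b H \<epsilon> (\<xi>(k := \<xi> k + d n)) x)"
      by (rule uxi_cont[OF e]) (use bhyp Omd in blast)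
    have c2: "continuous_on {0..1} (\<lambda>x. uxi N b H \<epsilon> (\<xi>(k := \<xi> k)) x)"
      by (rule uxi_cont[OF e]) (use bhyp Om in simp)
    show "continuous_on {0..1} (Q n)"
      unfolding Q_def[abs_def] by (intro continuous_intros c1 c2) (simp add: d0)
  next
    fix x :: real assume x: "x \<in> {0..1}"
    have "(\<lambda>n. ((\<lambda>t. uxi N b H \<epsilon> (\<xi>(k := t)) x) (\<xi> k + d n) - (\<lambda>t. uxi N b H \<epsilon> (\<xi>(k := t)) x) (\<xi> k)) / d n)
       \<longlonglongrightarrow> ((-1) ^ k * psi \<epsilon> (\<xi> k) x + (-1) ^ (N + 1) * D * psi \<epsilon> (H \<epsilon> \<xi>) x + \<beta> x)"
      by (rule deriv_seq[OF der[OF x] dlim d0])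
    then show "(\<lambda>n. Q n x) \<longlonglongrightarrow> uxik N b H \<epsilon> \<xi> k x"
      unfolding Q_def uk[OF x] by simp
  qed
qed



lemma final_arith:
  fixes w E C Ec xL :: real
  assumes w: "1 \<le> w" and E: "0 \<le> E" "E \<le> 1" and C: "0 \<le> C" and Ec: "0 \<le> Ec" "Ec \<le> C * E"
    and xL: "0 \<le> xL" "xL \<le> E"
  shows "3 * (4 * w\<^sup>2 * xL) + 2 * w * (Ec * w + Ec) + (Ec * w + Ec)\<^sup>2 + 16 * w * xL
         \<le> (28 + 4 * C + 4 * C\<^sup>2) * E * w\<^sup>2"
proof -
  have w0: "0 \<le> w" using w by simp
  have ww: "w \<le> w\<^sup>2" using w by (simp add: power2_eq_square)
  have "Ec \<le> Ec * w" using w Ec by (simp add: mult_le_cancel_left1)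
  then have e1: "Ec * w + Ec \<le> 2 * (C * E * w)"
    using Ec w0 by (smt (verit) mult_right_mono)
  have e0: "0 \<le> Ec * w + Ec" using Ec w0 by simp
  have "xL * w\<^sup>2 \<le> E * w\<^sup>2" using xL by (intro mult_right_mono) auto
  then have t1: "3 * (4 * w\<^sup>2 * xL) \<le> 12 * (E * w\<^sup>2)" by (simp add: algebra_simps)
  have t2: "2 * w * (Ec * w + Ec) \<le> 4 * C * (E * w\<^sup>2)"
  proof -
    have "2 * w * (Ec * w + Ec) \<le> 2 * w * (2 * (C * E * w))" using e1 w0 by (intro mult_left_mono) auto
    then show ?thesis by (simp add: power2_eq_square algebra_simps)
  qed
  have t3: "(Ec * w + Ec)\<^sup>2 \<le> 4 * C\<^sup>2 * (E * w\<^sup>2)"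
  proof -
    have "(Ec * w + Ec)\<^sup>2 \<le> (2 * (C * E * w))\<^sup>2" using e1 e0 by (intro power_mono) auto
    also have "\<dots> = 4 * C\<^sup>2 * (E * E) * w\<^sup>2" by (simp add: power2_eq_square algebra_simps)
    also have "\<dots> \<le> 4 * C\<^sup>2 * E * w\<^sup>2"
    proof -
      have "E * E \<le> E * 1" using E by (intro mult_left_mono) auto
      then show ?thesis using C by (intro mult_right_mono) (auto intro!: mult_left_mono)
    qed
    finally show ?thesis by (simp add: algebra_simps)
  qed
  have t4: "16 * w * xL \<le> 16 * (E * w\<^sup>2)"
  proof -
    have "w * xL \<le> w\<^sup>2 * E" using ww xL w0 by (intro mult_mono) auto
    then show ?thesis by (simp add: algebra_simps)
  qed
  have "(28 + 4 * C + 4 * C\<^sup>2) * E * w\<^sup>2 = 12 * (E * w\<^sup>2) + 4 * C * (E * w\<^sup>2) + 4 * C\<^sup>2 * (E * w\<^sup>2) + 16 * (E * w\<^sup>2)"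
    by (simp add: algebra_simps)
  then show ?thesis using t1 t2 t3 t4 by linarith
qed


lemma core:
  fixes N :: nat and \<kappa> C c cc \<epsilon> :: real
    and b :: "real \<Rightarrow> (nat \<Rightarrow> real) \<Rightarrow> real \<Rightarrow> real"
    and H :: "real \<Rightarrow> (nat \<Rightarrow> real) \<Rightarrow> real"
  assumes e: "0 < \<epsilon>" "\<epsilon> < 1" and C: "0 < C" and cc: "0 < cc" "cc \<le> c" "cc \<le> 1/2"
    and Om: "Omega N \<kappa> \<epsilon> (hxi N H \<epsilon> \<xi>)"
    and bhyp: "\<forall>h. Omega N \<kappa> \<epsilon> h \<longrightarrow> (\<forall>x. b \<epsilon> h differentiable (at x))"
    and bder: "\<forall>\<xi> k. Omega N \<kappa> \<epsilon> (hxi N H \<epsilon> \<xi>) \<longrightarrow> k \<in> {1..N} \<longrightarrow> (\<forall>x\<in>{0..1}.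
         (\<lambda>t. b \<epsilon> (hxi N H \<epsilon> (\<xi>(k := t))) x) differentiable (at (\<xi> k)) \<and>
         \<bar>deriv (\<lambda>t. b \<epsilon> (hxi N H \<epsilon> (\<xi>(k := t))) x) (\<xi> k)\<bar> \<le> C * exp (- c / \<epsilon> powr \<kappa>))"
    and Hder: "\<forall>\<xi> i. (\<forall>l\<in>{1..N}. 0 < \<xi> l \<and> \<xi> l < 1) \<longrightarrow> i \<in> {1..N} \<longrightarrow>
         (\<exists>D. ((\<lambda>t. H \<epsilon> (\<xi>(i := t))) has_real_derivative D) (at (\<xi> i)) \<and>
              \<bar>D - (-1) ^ (N - i)\<bar> \<le> C * exp (- c / \<epsilon> powr \<kappa>))"
    and k: "k \<in> {1..N}" and j: "j \<in> {1..N}"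
  shows "\<bar>L2ip (uxik N b H \<epsilon> \<xi> k) (uxik N b H \<epsilon> \<xi> j)
              - Xconst / \<epsilon> * ((if k = j then 1 else 0) + (-1) ^ (k + j))\<bar>
         \<le> (28 + 4 * C + 4 * C\<^sup>2) * exp (- cc / \<epsilon> powr \<kappa>) / \<epsilon>\<^sup>2"
proof -
  define Ec where "Ec = C * exp (- c / \<epsilon> powr \<kappa>)"
  define E where "E = exp (- cc / \<epsilon> powr \<kappa>)"
  define h where "h = hxi N H \<epsilon> \<xi>"
  define \<delta> where "\<delta> = \<epsilon> / \<epsilon> powr \<kappa>"
  define w where "w = 1 / \<epsilon>"
  define e where "e = Ec / \<epsilon> + Ec"
  have zp: "\<epsilon> powr \<kappa> > 0" using e by simp
  have Ec0: "0 \<le> Ec" unfolding Ec_def using C by simp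
  have EcE: "Ec \<le> C * E" unfolding Ec_def E_def using C cc zp
    by (intro mult_left_mono) (auto simp: divide_right_mono)
  have E01: "0 \<le> E" "E \<le> 1" unfolding E_def using cc zp by auto
  have w1: "1 \<le> w" unfolding w_def using e by simp
  have hN: "h l = \<xi> l" if "l \<le> N" for l unfolding h_def hxi_def using that by simp
  have hH: "h (N + 1) = H \<epsilon> \<xi>" unfolding h_def hxi_def by simp
  have Omh: "Omega N \<kappa> \<epsilon> h" using Om unfolding h_def .
  have \<xi>01: "\<forall>l\<in>{1..N}. 0 < \<xi> l \<and> \<xi> l < 1"
  proof
    fix l assume l: "l \<in> {1..N}"
    have "0 < h 1" "h (N + 1) < 1" using Omh unfolding Omega_def by auto
    moreover have "h 1 \<le> h l" "h l \<le> h (N + 1)" using Omega_mono[OF Omh] l by auto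
    ultimately show "0 < \<xi> l \<and> \<xi> l < 1" using hN[of l] l by auto
  qed
  have dec: "(\<forall>x\<in>{0..1}. \<bar>uxik N b H \<epsilon> \<xi> i x - (-1) ^ i * (psi \<epsilon> (\<xi> i) x - psi \<epsilon> (H \<epsilon> \<xi>) x)\<bar> \<le> e) \<and>
     (\<exists>Q. (\<forall>n. continuous_on {0..1} (Q n)) \<and> (\<forall>x\<in>{0..1}. (\<lambda>n. Q n x) \<longlonglongrightarrow> uxik N b H \<epsilon> \<xi> i x))"
    if i: "i \<in> {1..N}" for i
  proof -
    obtain D where D: "((\<lambda>t. H \<epsilon> (\<xi>(i := t))) has_real_derivative D) (at (\<xi> i))"
      "\<bar>D - (-1) ^ (N - i)\<bar> \<le> Ec"
      using Hder \<xi>01 i unfolding Ec_def by blast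
    have bd: "\<forall>x\<in>{0..1}. (\<lambda>t. b \<epsilon> (hxi N H \<epsilon> (\<xi>(i := t))) x) differentiable (at (\<xi> i)) \<and>
         \<bar>deriv (\<lambda>t. b \<epsilon> (hxi N H \<epsilon> (\<xi>(i := t))) x) (\<xi> i)\<bar> \<le> Ec"
      using bder Om i unfolding Ec_def by blast
    show ?thesis using uk_decomp[where N=N and k=i and \<kappa>=\<kappa> and \<epsilon>=\<epsilon> and H=H and \<xi>=\<xi> and b=b and Ec=Ec and D=D, OF e(1) i Om bhyp bd D] unfolding e_def by blast
  qed
  have \<delta>0: "\<delta> > 0" unfolding \<delta>_def using e zp by simp
  have sepH: "\<delta> \<le> \<bar>\<xi> i - H \<epsilon> \<xi>\<bar>" if i: "i \<in> {1..N}" for i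
    using Omega_sep[OF Omh, of i "N + 1"] i hN[of i] hH unfolding \<delta>_def by auto
  have sepkj: "\<delta> \<le> \<bar>\<xi> k - \<xi> j\<bar>" if "k \<noteq> j"
  proof (cases "k < j")
    case True then show ?thesis
      using Omega_sep[OF Omh, of k j] k j hN[of k] hN[of j] unfolding \<delta>_def by auto
  next
    case False then have "j < k" using that by simp
    then show ?thesis
      using Omega_sep[OF Omh, of j k] k j hN[of k] hN[of j] unfolding \<delta>_def by auto
  qed
  define \<tau> where "\<tau> = 4 / \<epsilon>\<^sup>2 * exp (- (\<delta> / 2) / \<epsilon>)"
  define P where "P x = (if k = j then (psi \<epsilon> (\<xi> k) x)\<^sup>2 else 0) + (-1) ^ (k + j) * (psi \<epsilon> (H \<epsilon> \<xi>) x)\<^sup>2" for x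
  define uk where "uk = uxik N b H \<epsilon> \<xi> k"
  define uj where "uj = uxik N b H \<epsilon> \<xi> j"
  define Bd where "Bd = 3 * \<tau> + 2 * (1 / \<epsilon>) * e + e\<^sup>2"
  have ptw: "\<bar>uk x * uj x - P x\<bar> \<le> Bd" if x: "x \<in> {0..1}" for x
  proof -
    define p where "p = psi \<epsilon> (\<xi> k) x"
    define q where "q = psi \<epsilon> (\<xi> j) x"
    define hh where "hh = psi \<epsilon> (H \<epsilon> \<xi>) x"
    have nn: "0 \<le> p" "0 \<le> q" "0 \<le> hh" "p \<le> 1 / \<epsilon>" "q \<le> 1 / \<epsilon>" "hh \<le> 1 / \<epsilon>"
      unfolding p_def q_def hh_def using psi_nonneg[OF e(1)] psi_le[OF e(1)] by auto
    have cr: "p * hh \<le> \<tau>" "hh * q \<le> \<tau>"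
    proof -
      show "p * hh \<le> \<tau>" unfolding p_def hh_def \<tau>_def
        using sepH[OF k] by (intro psi_cross[OF e(1)]) simp
      have "\<delta> \<le> \<bar>H \<epsilon> \<xi> - \<xi> j\<bar>" using sepH[OF j] by simp
      then show "hh * q \<le> \<tau>" unfolding q_def hh_def \<tau>_def
        by (intro psi_cross[OF e(1)]) simp
    qed
    have pq: "p * q \<le> \<tau>" if "k \<noteq> j"
      unfolding p_def q_def \<tau>_def using sepkj[OF that] by (intro psi_cross[OF e(1)]) simp
    have peq: "p = q" if "k = j" unfolding p_def q_def using that by simp
    have AP: "\<bar>((-1) ^ k * (p - hh)) * ((-1) ^ j * (q - hh)) - P x\<bar> \<le> 3 * \<tau>"
      unfolding P_def p_def[symmetric] q_def[symmetric] hh_def[symmetric]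
      by (rule AP_bound[OF nn(1-3) cr pq peq])
    have Ak: "\<bar>(-1) ^ k * (p - hh)\<bar> \<le> 1 / \<epsilon>" "\<bar>(-1) ^ j * (q - hh)\<bar> \<le> 1 / \<epsilon>"
      using nn by (auto simp: abs_mult)
    have Ek: "\<bar>uk x - (-1) ^ k * (p - hh)\<bar> \<le> e" "\<bar>uj x - (-1) ^ j * (q - hh)\<bar> \<le> e"
      using dec[OF k] dec[OF j] x unfolding uk_def uj_def p_def q_def hh_def by auto
    have "\<bar>((-1) ^ k * (p - hh) + (uk x - (-1) ^ k * (p - hh))) * ((-1) ^ j * (q - hh) + (uj x - (-1) ^ j * (q - hh))) - P x\<bar>
      \<le> 3 * \<tau> + 2 * (1 / \<epsilon>) * e + e\<^sup>2"
      by (rule prod_bound[OF Ak Ek AP])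
    then show ?thesis unfolding Bd_def by simp
  qed
  have int_uu: "(\<lambda>x. uk x * uj x) integrable_on {0..1}"
  proof -
    obtain Qk where Qk: "\<forall>n. continuous_on {0..1} (Qk n)" "\<forall>x\<in>{0..1}. (\<lambda>n. Qk n x) \<longlonglongrightarrow> uk x"
      using dec[OF k] unfolding uk_def by blast
    obtain Qj where Qj: "\<forall>n. continuous_on {0..1} (Qj n)" "\<forall>x\<in>{0..1}. (\<lambda>n. Qj n x) \<longlonglongrightarrow> uj x"
      using dec[OF j] unfolding uj_def by blast
    have bnd: "\<bar>uxik N b H \<epsilon> \<xi> i x\<bar> \<le> 1 / \<epsilon> + e" if i: "i \<in> {1..N}" and x: "x \<in> {0..1}" for i x
    proof -
      have "\<bar>(-1) ^ i * (psi \<epsilon> (\<xi> i) x - psi \<epsilon> (H \<epsilon> \<xi>) x)\<bar> \<le> 1 / \<epsilon>"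
      proof -
        have "0 \<le> psi \<epsilon> (\<xi> i) x" "0 \<le> psi \<epsilon> (H \<epsilon> \<xi>) x" "psi \<epsilon> (\<xi> i) x \<le> 1 / \<epsilon>" "psi \<epsilon> (H \<epsilon> \<xi>) x \<le> 1 / \<epsilon>"
          using psi_nonneg[OF e(1)] psi_le[OF e(1)] by auto
        then show ?thesis by (simp add: abs_mult abs_le_iff)
      qed
      moreover have "\<bar>uxik N b H \<epsilon> \<xi> i x - (-1) ^ i * (psi \<epsilon> (\<xi> i) x - psi \<epsilon> (H \<epsilon> \<xi>) x)\<bar> \<le> e"
        using dec[OF i] x by blast
      ultimately show ?thesis by linarith
    qed
    show ?thesis
      by (rule integrable_prod_limit[where M = "1 / \<epsilon> + e" and Q = Qk and R = Qj, OF _ _ _ _ bnd[OF k] bnd[OF j],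
            folded uk_def uj_def]) (use Qk Qj in auto)
  qed
  have int_sq: "(\<lambda>x. (psi \<epsilon> a x)\<^sup>2) integrable_on {0..1}" for a
    by (intro integrable_continuous_interval continuous_intros psi_cont[OF e(1)])
  have int_P: "P integrable_on {0..1}"
    unfolding P_def[abs_def] by (cases "k = j") (auto intro!: integrable_add integrable_mult_right int_sq)
  have d1: "\<bar>integral {0..1} (\<lambda>x. uk x * uj x) - integral {0..1} P\<bar> \<le> Bd"
  proof -
    have "integral {0..1} (\<lambda>x. uk x * uj x) - integral {0..1} P = integral {0..1} (\<lambda>x. uk x * uj x - P x)"
      by (rule integral_diff[symmetric, OF int_uu int_P])
    moreover have "norm (integral (cbox 0 1) (\<lambda>x. uk x * uj x - P x)) \<le> Bd * measure lborel (cbox (0::real) 1)"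
    proof (rule has_integral_bound)
      show "0 \<le> Bd" using ptw[of 0] by simp
      show "((\<lambda>x. uk x * uj x - P x) has_integral integral (cbox 0 1) (\<lambda>x. uk x * uj x - P x)) (cbox 0 1)"
        using integrable_diff[OF int_uu int_P] by (simp add: cbox_interval integrable_integral)
      show "norm (uk x * uj x - P x) \<le> Bd" if "x \<in> cbox 0 1" for x
        using ptw that by (simp add: cbox_interval)
    qed
    ultimately show ?thesis by (simp add: cbox_interval)
  qed
  define I where "I a = integral {0..1} (\<lambda>x. (psi \<epsilon> a x)\<^sup>2)" for a
  define L where "L = \<delta> / 2 / \<epsilon>"
  have L0: "0 \<le> L" unfolding L_def using \<delta>0 e by simp
  have Iest: "\<bar>I (\<xi> i) - Xconst / \<epsilon>\<bar> \<le> 8 / \<epsilon> * exp (- L)" "\<bar>I (H \<epsilon> \<xi>) - Xconst / \<epsilon>\<bar> \<le> 8 / \<epsilon> * exp (- L)"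
    if i: "i \<in> {1..N}" for i
  proof -
    have b1: "\<delta> / 2 < h l" "\<delta> / 2 < 1 - h l" if "1 \<le> l" "l \<le> N + 1" for l
      using Omega_bdry[OF Omh that] unfolding \<delta>_def by auto
    have a: "\<delta> / 2 \<le> \<xi> i" "\<delta> / 2 \<le> 1 - \<xi> i" using b1[of i] i hN[of i] by auto
    have "L \<le> \<xi> i / \<epsilon>" "L \<le> (1 - \<xi> i) / \<epsilon>" unfolding L_def
      by (rule divide_right_mono[OF a(1)], use e in simp) (rule divide_right_mono[OF a(2)], use e in simp)
    then show "\<bar>I (\<xi> i) - Xconst / \<epsilon>\<bar> \<le> 8 / \<epsilon> * exp (- L)" unfolding I_def
      by (intro psi_sq_est[OF e(1) L0])
    have a2: "\<delta> / 2 \<le> H \<epsilon> \<xi>" "\<delta> / 2 \<le> 1 - H \<epsilon> \<xi>" using b1[of "N + 1"] hH by auto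
    have "L \<le> H \<epsilon> \<xi> / \<epsilon>" "L \<le> (1 - H \<epsilon> \<xi>) / \<epsilon>" unfolding L_def
      by (rule divide_right_mono[OF a2(1)], use e in simp) (rule divide_right_mono[OF a2(2)], use e in simp)
    then show "\<bar>I (H \<epsilon> \<xi>) - Xconst / \<epsilon>\<bar> \<le> 8 / \<epsilon> * exp (- L)" unfolding I_def
      by (intro psi_sq_est[OF e(1) L0])
  qed
  have d2: "\<bar>integral {0..1} P - Xconst / \<epsilon> * ((if k = j then 1 else 0) + (-1) ^ (k + j))\<bar> \<le> 16 / \<epsilon> * exp (- L)"
  proof (cases "k = j")
    case True
    have "integral {0..1} P = I (\<xi> k) + I (H \<epsilon> \<xi>)"
      unfolding P_def[abs_def] I_def using True
      by (simp add: integral_add int_sq flip: power_add)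
    moreover have "(-1::real) ^ (k + j) = 1" using True by (simp flip: mult_2)
    ultimately have "integral {0..1} P - Xconst / \<epsilon> * ((if k = j then 1 else 0) + (-1) ^ (k + j))
       = (I (\<xi> k) - Xconst / \<epsilon>) + (I (H \<epsilon> \<xi>) - Xconst / \<epsilon>)" using True by simp
    then show ?thesis using Iest[OF k] by simp
  next
    case False
    have "integral {0..1} P = (-1) ^ (k + j) * I (H \<epsilon> \<xi>)"
      unfolding P_def[abs_def] I_def using False by (simp add: int_sq)
    then have "integral {0..1} P - Xconst / \<epsilon> * ((if k = j then 1 else 0) + (-1) ^ (k + j))
       = (-1) ^ (k + j) * (I (H \<epsilon> \<xi>) - Xconst / \<epsilon>)" using False by (simp add: algebra_simps)
    then have "\<bar>integral {0..1} P - Xconst / \<epsilon> * ((if k = j then 1 else 0) + (-1) ^ (k + j))\<bar>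
       = \<bar>I (H \<epsilon> \<xi>) - Xconst / \<epsilon>\<bar>" by (simp add: abs_mult)
    then show ?thesis using Iest(2)[OF k] e by (simp add: divide_right_mono)
  qed
  have expL: "exp (- L) \<le> E"
  proof -
    have "\<delta> / 2 / \<epsilon> = (1 / \<epsilon> powr \<kappa>) / 2" unfolding \<delta>_def using e by simp
    moreover have "cc / \<epsilon> powr \<kappa> \<le> (1 / \<epsilon> powr \<kappa>) / 2"
    proof -
      have "cc / \<epsilon> powr \<kappa> \<le> (1 / 2) / \<epsilon> powr \<kappa>" using cc zp by (intro divide_right_mono) auto
      then show ?thesis by simp
    qed
    ultimately show ?thesis unfolding E_def L_def by simp
  qed
  have \<tau>le: "\<tau> = 4 * w\<^sup>2 * exp (- L)" unfolding \<tau>_def w_def L_def by (simp add: power_divide)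
  have fa: "3 * (4 * w\<^sup>2 * exp (- L)) + 2 * w * (Ec * w + Ec) + (Ec * w + Ec)\<^sup>2 + 16 * w * exp (- L)
         \<le> (28 + 4 * C + 4 * C\<^sup>2) * E * w\<^sup>2"
    by (rule final_arith[OF w1 E01 _ Ec0 EcE _ expL]) (use C in auto)
  have "\<bar>L2ip uk uj - Xconst / \<epsilon> * ((if k = j then 1 else 0) + (-1) ^ (k + j))\<bar> \<le> Bd + 16 / \<epsilon> * exp (- L)"
    unfolding L2ip_def using d1 d2 by linarith
  also have "Bd + 16 / \<epsilon> * exp (- L) = 3 * (4 * w\<^sup>2 * exp (- L)) + 2 * w * (Ec * w + Ec) + (Ec * w + Ec)\<^sup>2 + 16 * w * exp (- L)"
    unfolding Bd_def \<tau>le e_def w_def by (simp add: field_simps)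
  also have "\<dots> \<le> (28 + 4 * C + 4 * C\<^sup>2) * E * w\<^sup>2" by (rule fa)
  also have "\<dots> = (28 + 4 * C + 4 * C\<^sup>2) * exp (- cc / \<epsilon> powr \<kappa>) / \<epsilon>\<^sup>2"
    unfolding E_def w_def by (simp add: power_divide)
  finally show ?thesis unfolding uk_def uj_def .
qed




lemma extract1: "\<forall>h. PO h \<longrightarrow> (\<forall>x. PD h x \<and> PR h x) \<and> PS h \<Longrightarrow> \<forall>h. PO h \<longrightarrow> (\<forall>x. PD h x)"
  by blast

theorem lemma5p9:
  fixes N :: nat and \<kappa>0 \<mu> :: real
    and b :: "real \<Rightarrow> (nat \<Rightarrow> real) \<Rightarrow> real \<Rightarrow> real"
    and H :: "real \<Rightarrow> (nat \<Rightarrow> real) \<Rightarrow> real"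
  assumes N: "N \<ge> 1"
    and kappa: "0 < \<kappa>0"
    and mu: "-1 < \<mu>" "\<mu> < 1"
    and standing: "\<exists>C>0. \<exists>c>0. \<exists>e0>0. \<forall>\<epsilon>. 0 < \<epsilon> \<and> \<epsilon> < e0 \<longrightarrow>
      \<comment> \<open>beta_N = ((-1)^N - 1)/2 + O(exp), also for x-derivatives; u^h(0) = -1; Neumann BCs\<close>
      (\<forall>h. Omega N \<kappa>0 \<epsilon> h \<longrightarrow>
         (\<forall>x. b \<epsilon> h differentiable (at x) \<and>
              \<bar>b \<epsilon> h x - ((-1) ^ N - 1) / 2\<bar> \<le> C * exp (- c / \<epsilon> powr \<kappa>0) \<and>
              \<bar>deriv (b \<epsilon> h) x\<bar> \<le> C * exp (- c / \<epsilon> powr \<kappa>0)) \<and>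
         uh N b \<epsilon> h 0 = -1 \<and>
         deriv (uh N b \<epsilon> h) 0 = 0 \<and> deriv (uh N b \<epsilon> h) 1 = 0) \<and>
      \<comment> \<open>h-derivatives of beta_N are O(exp) (stated along the constraint manifold)\<close>
      (\<forall>\<xi> k. Omega N \<kappa>0 \<epsilon> (hxi N H \<epsilon> \<xi>) \<longrightarrow> k \<in> {1..N} \<longrightarrow> (\<forall>x\<in>{0..1}.
         (\<lambda>t. b \<epsilon> (hxi N H \<epsilon> (\<xi>(k := t))) x) differentiable (at (\<xi> k)) \<and>
         \<bar>deriv (\<lambda>t. b \<epsilon> (hxi N H \<epsilon> (\<xi>(k := t))) x) (\<xi> k)\<bar> \<le> C * exp (- c / \<epsilon> powr \<kappa>0))) \<and>
      \<comment> \<open>h_{N+1}(xi) depends only on xi = (xi_1,...,xi_N)\<close>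
      (\<forall>\<xi> \<xi>'. (\<forall>l\<in>{1..N}. \<xi> l = \<xi>' l) \<longrightarrow> H \<epsilon> \<xi> = H \<epsilon> \<xi>') \<and>
      \<comment> \<open>u^h in M_mu iff h = (xi, h_{N+1}(xi))\<close>
      (\<forall>h. Omega N \<kappa>0 \<epsilon> h \<longrightarrow>
         (integral {0..1} (uh N b \<epsilon> h) = \<mu> \<longleftrightarrow> h (N + 1) = H \<epsilon> h)) \<and>
      \<comment> \<open>h_{N+1} is differentiable on (0,1)^N with d h_{N+1}/d h_i = (-1)^(N-i) + O(exp)\<close>
      (\<forall>\<xi> i. (\<forall>l\<in>{1..N}. 0 < \<xi> l \<and> \<xi> l < 1) \<longrightarrow> i \<in> {1..N} \<longrightarrow>
         (\<exists>D. ((\<lambda>t. H \<epsilon> (\<xi>(i := t))) has_real_derivative D) (at (\<xi> i)) \<and>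
              \<bar>D - (-1) ^ (N - i)\<bar> \<le> C * exp (- c / \<epsilon> powr \<kappa>0)))"
  shows "\<exists>C>0. \<exists>c>0. \<exists>e0>0. \<forall>\<epsilon> \<xi> k j. 0 < \<epsilon> \<longrightarrow> \<epsilon> < e0 \<longrightarrow>
           Omega N \<kappa>0 \<epsilon> (hxi N H \<epsilon> \<xi>) \<longrightarrow> k \<in> {1..N} \<longrightarrow> j \<in> {1..N} \<longrightarrow>
           \<bar>L2ip (uxik N b H \<epsilon> \<xi> k) (uxik N b H \<epsilon> \<xi> j)
              - Xconst / \<epsilon> * ((if k = j then 1 else 0) + (-1) ^ (k + j))\<bar>
             \<le> C * exp (- c / \<epsilon> powr \<kappa>0)"
proof -
  obtain C c e0 where C: "C > 0" and c: "c > 0" and e0: "e0 > 0" and st: "\<forall>\<epsilon>. 0 < \<epsilon> \<and> \<epsilon> < e0 \<longrightarrow>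
      (\<forall>h. Omega N \<kappa>0 \<epsilon> h \<longrightarrow>
         (\<forall>x. b \<epsilon> h differentiable (at x) \<and>
              \<bar>b \<epsilon> h x - ((-1) ^ N - 1) / 2\<bar> \<le> C * exp (- c / \<epsilon> powr \<kappa>0) \<and>
              \<bar>deriv (b \<epsilon> h) x\<bar> \<le> C * exp (- c / \<epsilon> powr \<kappa>0)) \<and>
         uh N b \<epsilon> h 0 = -1 \<and>
         deriv (uh N b \<epsilon> h) 0 = 0 \<and> deriv (uh N b \<epsilon> h) 1 = 0) \<and>
      (\<forall>\<xi> k. Omega N \<kappa>0 \<epsilon> (hxi N H \<epsilon> \<xi>) \<longrightarrow> k \<in> {1..N} \<longrightarrow> (\<forall>x\<in>{0..1}.
         (\<lambda>t. b \<epsilon> (hxi N H \<epsilon> (\<xi>(k := t))) x) differentiable (at (\<xi> k)) \<and>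
         \<bar>deriv (\<lambda>t. b \<epsilon> (hxi N H \<epsilon> (\<xi>(k := t))) x) (\<xi> k)\<bar> \<le> C * exp (- c / \<epsilon> powr \<kappa>0))) \<and>
      (\<forall>\<xi> \<xi>'. (\<forall>l\<in>{1..N}. \<xi> l = \<xi>' l) \<longrightarrow> H \<epsilon> \<xi> = H \<epsilon> \<xi>') \<and>
      (\<forall>h. Omega N \<kappa>0 \<epsilon> h \<longrightarrow>
         (integral {0..1} (uh N b \<epsilon> h) = \<mu> \<longleftrightarrow> h (N + 1) = H \<epsilon> h)) \<and>
      (\<forall>\<xi> i. (\<forall>l\<in>{1..N}. 0 < \<xi> l \<and> \<xi> l < 1) \<longrightarrow> i \<in> {1..N} \<longrightarrow>
         (\<exists>D. ((\<lambda>t. H \<epsilon> (\<xi>(i := t))) has_real_derivative D) (at (\<xi> i)) \<and>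
              \<bar>D - (-1) ^ (N - i)\<bar> \<le> C * exp (- c / \<epsilon> powr \<kappa>0)))"
    using standing by (elim exE conjE) (rule that; assumption)
  define c1 where "c1 = min c (1/2)"
  have c1: "0 < c1" "c1 \<le> c" "c1 \<le> 1/2" unfolding c1_def using c by auto
  obtain ea where ea: "ea > 0" and asy: "\<forall>\<epsilon>. 0 < \<epsilon> \<and> \<epsilon> < ea \<longrightarrow>
     exp (- c1 / \<epsilon> powr \<kappa>0) \<le> \<epsilon>\<^sup>2 * exp (- (c1/2) / \<epsilon> powr \<kappa>0)"
    using asym[OF c1(1) kappa] by blast
  define K where "K = 28 + 4 * C + 4 * C\<^sup>2"
  have K: "K > 0" unfolding K_def using C by (simp add: add_pos_nonneg)
  have main: "\<bar>L2ip (uxik N b H \<epsilon> \<xi> k) (uxik N b H \<epsilon> \<xi> j)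
              - Xconst / \<epsilon> * ((if k = j then 1 else 0) + (-1) ^ (k + j))\<bar>
         \<le> K * exp (- (c1 / 2) / \<epsilon> powr \<kappa>0)"
    if "0 < \<epsilon>" "\<epsilon> < min e0 (min 1 ea)" "Omega N \<kappa>0 \<epsilon> (hxi N H \<epsilon> \<xi>)" "k \<in> {1..N}" "j \<in> {1..N}"
    for \<epsilon> \<xi> k j
  proof -
    note e = that(1,2) and Om = that(3) and k = that(4) and j = that(5)
    have e1: "0 < \<epsilon>" "\<epsilon> < 1" using e by auto
    have e0': "0 < \<epsilon> \<and> \<epsilon> < e0" using e by simp
    note Qe = mp[OF spec[OF st, of \<epsilon>] e0']
    note ste = extract1[OF conjunct1[OF Qe]] conjunct1[OF conjunct2[OF Qe]]
      conjunct2[OF conjunct2[OF conjunct2[OF conjunct2[OF Qe]]]]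
    have "\<bar>L2ip (uxik N b H \<epsilon> \<xi> k) (uxik N b H \<epsilon> \<xi> j)
              - Xconst / \<epsilon> * ((if k = j then 1 else 0) + (-1) ^ (k + j))\<bar>
         \<le> K * exp (- c1 / \<epsilon> powr \<kappa>0) / \<epsilon>\<^sup>2"
      unfolding K_def using core[where N=N and \<kappa>=\<kappa>0 and \<epsilon>=\<epsilon> and b=b and H=H and \<xi>=\<xi> and C=C and c=c and cc=c1, OF e1 C c1 Om ste k j] .
    also have "\<dots> \<le> K * (\<epsilon>\<^sup>2 * exp (- (c1/2) / \<epsilon> powr \<kappa>0)) / \<epsilon>\<^sup>2"
      using asy e K by (intro divide_right_mono mult_left_mono) auto
    also have "\<dots> = K * exp (- (c1 / 2) / \<epsilon> powr \<kappa>0)" using e by simp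
    finally show "\<bar>L2ip (uxik N b H \<epsilon> \<xi> k) (uxik N b H \<epsilon> \<xi> j)
              - Xconst / \<epsilon> * ((if k = j then 1 else 0) + (-1) ^ (k + j))\<bar>
         \<le> K * exp (- (c1 / 2) / \<epsilon> powr \<kappa>0)" .
  qed
  show ?thesis
    apply (rule exI[of _ K], rule conjI[OF K])
    apply (rule exI[of _ "c1/2"], rule conjI, simp add: c1)
    apply (rule exI[of _ "min e0 (min 1 ea)"], rule conjI, simp add: e0 ea)
    using main by blast
qed


end
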